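(* Let $M\geq 1$. A seller holds a set $\mathbb{M}$ of $M$ different goods, one unit of each, and has an arbitrary valuation function $\sigma$ over bundles of goods ($\sigma(X)$ is the seller's value for $X\subseteq\mathbb{M}$). The buyer has a unit-demand valuation: he values each item $i$ at $\beta_i$ and wants at most one item. The price of item $i$ is fixed exogenously at $p_i$, and both agents have utilities quasi-linear in money. Then the competitive ratio of any DSIC mechanism is at most $1/M$.
   Context: Selling item $i$ at price $p_i$ gives the buyer utility $b_i=\beta_i-p_i$ and the seller utility $s_i=p_i+\sigma(\mathbb{M}\setminus\{i\})-\sigma(\mathbb{M})$; option $0$ (no trade) gives both utility $0$. A mechanism receives the agents' reported valuations and outputs a probability distribution $(r_0,\dots,r_M)$ over which item (if any) is traded. It is DSIC if for each agent reporting the true valuation maximizes his expected utility ($\sum_i r_i b_i$ for the buyer, $\sum_i r_i s_i$ for the seller) whatever the other agent reports. The optimal gain-from-trade subject to individual rationality is $OPT=\max\{b_i+s_i: 0\leq i\leq M,\ b_i\geq 0,\ s_i\geq 0\}$ (with $b_0=s_0=0$); the mechanism's gain under truthful reports is $G=\sum_{i=1}^M r_i(b_i+s_i)$, and its competitive ratio is the minimum of $G/OPT$ over all valuation profiles. *)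

theory Defs
  imports Complex_Main "HOL-Library.Extended_Real"
begin

text \<open>Items are 1..M; option 0 is no trade. The seller initially holds all of {1..M}.\<close>

definition items :: "nat \<Rightarrow> nat set" where
  "items M = {1..M}"

definition valid_buyer :: "nat \<Rightarrow> (nat \<Rightarrow> real) \<Rightarrow> bool" where
  "valid_buyer M beta \<longleftrightarrow> (\<forall>i\<in>items M. beta i \<ge> 0) \<and> (\<forall>i. i \<notin> items M \<longrightarrow> beta i = 0)"

definition valid_seller :: "nat \<Rightarrow> (nat set \<Rightarrow> real) \<Rightarrow> bool" where
  "valid_seller M sigma \<longleftrightarrow> (\<forall>X. \<not> X \<subseteq> items M \<longrightarrow> sigma X = 0)"

definition bu :: "(nat \<Rightarrow> real) \<Rightarrow> (nat \<Rightarrow> real) \<Rightarrow> nat \<Rightarrow> real" where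
  "bu p beta i = beta i - p i"

definition su :: "nat \<Rightarrow> (nat \<Rightarrow> real) \<Rightarrow> (nat set \<Rightarrow> real) \<Rightarrow> nat \<Rightarrow> real" where
  "su M p sigma i = p i + sigma (items M - {i}) - sigma (items M)"

text \<open>A mechanism maps reports (beta, sigma) to probabilities r 0, ..., r M.\<close>
type_synonym mechanism = "(nat \<Rightarrow> real) \<Rightarrow> (nat set \<Rightarrow> real) \<Rightarrow> nat \<Rightarrow> real"

definition is_mechanism :: "nat \<Rightarrow> mechanism \<Rightarrow> bool" where
  "is_mechanism M mech \<longleftrightarrow>
     (\<forall>beta sigma. valid_buyer M beta \<and> valid_seller M sigma \<longrightarrow>
        (\<forall>i\<in>{0..M}. mech beta sigma i \<ge> 0) \<and> (\<Sum>i=0..M. mech beta sigma i) = 1)"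

definition buyer_util :: "nat \<Rightarrow> (nat \<Rightarrow> real) \<Rightarrow> (nat \<Rightarrow> real) \<Rightarrow> (nat \<Rightarrow> real) \<Rightarrow> real" where
  "buyer_util M p r beta = (\<Sum>i\<in>items M. r i * bu p beta i)"

definition seller_util :: "nat \<Rightarrow> (nat \<Rightarrow> real) \<Rightarrow> (nat \<Rightarrow> real) \<Rightarrow> (nat set \<Rightarrow> real) \<Rightarrow> real" where
  "seller_util M p r sigma = (\<Sum>i\<in>items M. r i * su M p sigma i)"

definition DSIC :: "nat \<Rightarrow> (nat \<Rightarrow> real) \<Rightarrow> mechanism \<Rightarrow> bool" where
  "DSIC M p mech \<longleftrightarrow>
     (\<forall>beta beta' sigma. valid_buyer M beta \<and> valid_buyer M beta' \<and> valid_seller M sigma \<longrightarrow>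
        buyer_util M p (mech beta' sigma) beta \<le> buyer_util M p (mech beta sigma) beta) \<and>
     (\<forall>beta sigma sigma'. valid_buyer M beta \<and> valid_seller M sigma \<and> valid_seller M sigma' \<longrightarrow>
        seller_util M p (mech beta sigma') sigma \<le> seller_util M p (mech beta sigma) sigma)"

definition OPT :: "nat \<Rightarrow> (nat \<Rightarrow> real) \<Rightarrow> (nat \<Rightarrow> real) \<Rightarrow> (nat set \<Rightarrow> real) \<Rightarrow> real" where
  "OPT M p beta sigma = Max ({0} \<union> {bu p beta i + su M p sigma i | i. i \<in> items M \<and>
        bu p beta i \<ge> 0 \<and> su M p sigma i \<ge> 0})"

definition gain :: "nat \<Rightarrow> (nat \<Rightarrow> real) \<Rightarrow> mechanism \<Rightarrow> (nat \<Rightarrow> real) \<Rightarrow> (nat set \<Rightarrow> real) \<Rightarrow> real" where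
  "gain M p mech beta sigma =
     (\<Sum>i\<in>items M. mech beta sigma i * (bu p beta i + su M p sigma i))"

definition comp_ratio :: "nat \<Rightarrow> (nat \<Rightarrow> real) \<Rightarrow> mechanism \<Rightarrow> ereal" where
  "comp_ratio M p mech =
     (INF bs \<in> {(beta, sigma). valid_buyer M beta \<and> valid_seller M sigma \<and> OPT M p beta sigma > 0}.
        ereal (gain M p mech (fst bs) (snd bs) / OPT M p (fst bs) (snd bs)))"

end

theory Submission
  imports Defs
begin

definition mkb :: "nat \<Rightarrow> (nat \<Rightarrow> real) \<Rightarrow> (nat \<Rightarrow> real) \<Rightarrow> nat \<Rightarrow> real" where
  "mkb M p b i = (if i \<in> items M then b i + p i else 0)"

definition mks :: "nat \<Rightarrow> (nat \<Rightarrow> real) \<Rightarrow> (nat \<Rightarrow> real) \<Rightarrow> nat set \<Rightarrow> real" where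
  "mks M p s X = (if X \<subseteq> items M then (\<Sum>i\<in>items M - X. s i - p i) else 0)"

lemma valid_mkb: "(\<And>i. i \<in> items M \<Longrightarrow> b i + p i \<ge> 0) \<Longrightarrow> valid_buyer M (mkb M p b)"
  unfolding valid_buyer_def mkb_def by auto

lemma valid_mks: "valid_seller M (mks M p s)"
  unfolding valid_seller_def mks_def by auto

lemma bu_mkb: "i \<in> items M \<Longrightarrow> bu p (mkb M p b) i = b i"
  unfolding bu_def mkb_def by auto

lemma su_mks: assumes "i \<in> items M" shows "su M p (mks M p s) i = s i"
proof -
  have "items M - (items M - {i}) = {i}" using assms by auto
  then show ?thesis unfolding su_def mks_def by auto
qed

lemma OPT_ge:
  assumes "i \<in> items M" "bu p beta i \<ge> 0" "su M p sigma i \<ge> 0"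
  shows "OPT M p beta sigma \<ge> bu p beta i + su M p sigma i"
proof -
  let ?S = "{bu p beta i + su M p sigma i | i. i \<in> items M \<and> bu p beta i \<ge> 0 \<and> su M p sigma i \<ge> 0}"
  have "?S \<subseteq> (\<lambda>i. bu p beta i + su M p sigma i) ` items M" by auto
  moreover have "finite (items M)" unfolding items_def by simp
  ultimately have "finite ?S" using finite_subset by blast
  then have fin: "finite ({0} \<union> ?S)" by simp
  have "bu p beta i + su M p sigma i \<in> {0} \<union> ?S" using assms by blast
  then show ?thesis unfolding OPT_def using Max_ge[OF fin] by blast
qed

lemma ratio_bound:
  assumes "ereal c \<le> comp_ratio M p mech" "valid_buyer M beta" "valid_seller M sigma"
    "OPT M p beta sigma > 0"
  shows "gain M p mech beta sigma \<ge> c * OPT M p beta sigma"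
proof -
  have "comp_ratio M p mech \<le> ereal (gain M p mech beta sigma / OPT M p beta sigma)"
    unfolding comp_ratio_def
    by (rule INF_lower2[of "(beta, sigma)"]) (use assms in auto)
  then have "ereal c \<le> ereal (gain M p mech beta sigma / OPT M p beta sigma)"
    using assms(1) by (rule order_trans[rotated])
  then have "c \<le> gain M p mech beta sigma / OPT M p beta sigma" by simp
  then show ?thesis using assms(4) by (simp add: pos_le_divide_eq)
qed

lemma sum_le_one:
  assumes "is_mechanism M mech" "valid_buyer M beta" "valid_seller M sigma"
  shows "(\<Sum>i\<in>items M. mech beta sigma i) \<le> 1"
    and "\<And>i. i \<in> items M \<Longrightarrow> mech beta sigma i \<ge> 0"
proof -
  have h: "\<forall>i\<in>{0..M}. mech beta sigma i \<ge> 0" "(\<Sum>i=0..M. mech beta sigma i) = 1"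
    using assms unfolding is_mechanism_def by auto
  have "{0..M} = insert 0 (items M)" unfolding items_def by auto
  then have "(\<Sum>i=0..M. mech beta sigma i) = mech beta sigma 0 + (\<Sum>i\<in>items M. mech beta sigma i)"
    by (simp add: items_def)
  moreover have "mech beta sigma 0 \<ge> 0" using h(1) by auto
  ultimately show "(\<Sum>i\<in>items M. mech beta sigma i) \<le> 1" using h(2) by linarith
  show "\<And>i. i \<in> items M \<Longrightarrow> mech beta sigma i \<ge> 0" using h unfolding items_def by auto
qed

lemma chain:
  fixes r :: "nat \<Rightarrow> nat \<Rightarrow> real" and W :: "nat \<Rightarrow> real"
  assumes A: "\<And>k. 1 \<le> k \<Longrightarrow> k < M \<Longrightarrow> r k k \<ge> d"
   and B: "W M \<ge> \<epsilon> * d"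
   and C: "\<And>k. 1 \<le> k \<Longrightarrow> k < M \<Longrightarrow> W k \<ge> W (Suc k) + (if Suc k < M then \<epsilon> * r (Suc k) (Suc k) else 0)"
   and epos: "\<epsilon> > 0"
  shows "\<forall>k. M - k = n \<longrightarrow> 1 \<le> k \<longrightarrow> k < M \<longrightarrow> W k \<ge> \<epsilon> * real (M - k) * d"
proof (induction n)
  case 0
  then show ?case by auto
next
  case (Suc n)
  show ?case
  proof (intro allI impI)
    fix k assume k: "M - k = Suc n" "1 \<le> k" "k < M"
    show "W k \<ge> \<epsilon> * real (M - k) * d"
    proof (cases "Suc k < M")
      case True
      have ih: "W (Suc k) \<ge> \<epsilon> * real (M - Suc k) * d"
      proof -
        have "M - Suc k = n" using k by auto
        then show ?thesis using Suc.IH True by auto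
      qed
      have "\<epsilon> * r (Suc k) (Suc k) \<ge> \<epsilon> * d"
        using A[of "Suc k"] True epos by (simp add: mult_left_mono)
      moreover have "real (M - k) = real (M - Suc k) + 1" using True by auto
      ultimately show ?thesis using C[OF k(2) k(3)] True ih by (simp add: algebra_simps)
    next
      case False
      then have "Suc k = M" using k by auto
      then have "M - k = 1" by auto
      then show ?thesis using C[OF k(2) k(3)] B False \<open>Suc k = M\<close> by auto
    qed
  qed
qed

lemma core:
  fixes M :: nat and p :: "nat \<Rightarrow> real" and mech :: mechanism and c :: real
  assumes M1: "M \<ge> 1" and mechM: "is_mechanism M mech" and ds: "DSIC M p mech"
    and cM: "c > 1 / real M"
    and R: "\<And>beta sigma. valid_buyer M beta \<Longrightarrow> valid_seller M sigma \<Longrightarrow> OPT M p beta sigma > 0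
             \<Longrightarrow> gain M p mech beta sigma \<ge> c * OPT M p beta sigma"
  shows False
proof -
  define \<kappa> where "\<kappa> = max 0 (- p M)"
  define \<eta> where "\<eta> = min ((c - 1 / real M) / 2) (1/2)"
  define \<epsilon> where "\<epsilon> = 4 * \<kappa> / \<eta> + 1"
  define K where "K = 4 / \<eta>"
  define Q where "Q = 2 / \<eta>"
  define P where "P = (\<Sum>i\<in>items M. \<bar>p i\<bar>)"
  define D where "D = \<kappa> + \<epsilon> + P + 1"
  define H where "H i = D * Q ^ (M - i)" for i
  define bv where "bv i = (if i < M then H i else \<kappa>)" for i
  define L where "L = (1 + K) * H 1 + 1"
  define sv where "sv k i = (if i < k then - L else if i = k \<and> k < M then 0 else \<epsilon>)" for k i
  define beta where "beta = mkb M p bv"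
  define sig where "sig k = mks M p (sv k)" for k
  define r where "r k i = mech beta (sig k) i" for k i
  define W where "W k = (\<Sum>i\<in>items M. r k i * sv k i)" for k
  have Mpos: "real M > 0" using M1 by auto
  have c0: "c > 0" using cM Mpos by (meson divide_pos_pos less_trans zero_less_one)
  have eta0: "\<eta> > 0" using cM unfolding \<eta>_def by auto
  have eta1: "\<eta> \<le> 1/2" unfolding \<eta>_def by auto
  have eta2: "\<eta> \<le> (c - 1 / real M) / 2" unfolding \<eta>_def by (auto simp: min_def)
  have k0: "\<kappa> \<ge> 0" unfolding \<kappa>_def by auto
  have e0: "\<epsilon> > 0"
  proof -
    have "4 * \<kappa> / \<eta> \<ge> 0" using k0 eta0 by simp
    then show ?thesis unfolding \<epsilon>_def by linarith
  qed
  have etaeps: "\<eta> * \<epsilon> = 4 * \<kappa> + \<eta>" unfolding \<epsilon>_def using eta0 by (simp add: field_simps)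
  have etaQ: "\<eta> * Q = 2" unfolding Q_def using eta0 by simp
  have Q1: "Q \<ge> 1" unfolding Q_def using eta0 eta1 by (simp add: field_simps)
  have etaK: "\<eta> * K = 4" unfolding K_def using eta0 by simp
  have K0: "K > 0" unfolding K_def using eta0 by simp
  have P0: "\<And>i. i \<in> items M \<Longrightarrow> \<bar>p i\<bar> \<le> P"
    unfolding P_def by (rule member_le_sum) (auto simp: items_def)
  have Pnn: "P \<ge> 0" unfolding P_def by (simp add: sum_nonneg)
  have D1: "D \<ge> 1" "D \<ge> \<kappa> + \<epsilon>" "D \<ge> P" unfolding D_def using k0 e0 Pnn by auto
  have HD: "\<And>i. H i \<ge> D" unfolding H_def using D1 Q1
    by (metis mult.right_neutral mult_left_mono one_le_power order_trans zero_le_one)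
  have Hmono: "\<And>i j. M - i \<le> M - j \<Longrightarrow> H i \<le> H j"
    unfolding H_def using D1 Q1 by (intro mult_left_mono power_increasing) auto
  have HL: "\<And>i. 1 \<le> i \<Longrightarrow> (1 + K) * H i \<le> L - 1"
  proof -
    fix i :: nat assume "1 \<le> i"
    then have "H i \<le> H 1" by (intro Hmono) auto
    then show "(1 + K) * H i \<le> L - 1" unfolding L_def using K0 by (simp add: mult_left_mono)
  qed
  have vb: "valid_buyer M beta" unfolding beta_def
  proof (rule valid_mkb)
    fix i assume i: "i \<in> items M"
    show "bv i + p i \<ge> 0"
    proof (cases "i < M")
      case True
      then show ?thesis unfolding bv_def using HD[of i] D1 P0[OF i] by auto
    next
      case False
      then have "i = M" using i unfolding items_def by auto
      then show ?thesis unfolding bv_def \<kappa>_def by auto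
    qed
  qed
  have vs: "\<And>k. valid_seller M (sig k)" unfolding sig_def by (rule valid_mks)
  have bu: "\<And>i. i \<in> items M \<Longrightarrow> bu p beta i = bv i" unfolding beta_def by (rule bu_mkb)
  have su: "\<And>k i. i \<in> items M \<Longrightarrow> su M p (sig k) i = sv k i" unfolding sig_def by (rule su_mks)
  have rnn: "\<And>k i. i \<in> items M \<Longrightarrow> r k i \<ge> 0"
    unfolding r_def using sum_le_one(2)[OF mechM vb vs] by auto
  have rsum: "\<And>k. (\<Sum>i\<in>items M. r k i) \<le> 1"
    unfolding r_def using sum_le_one(1)[OF mechM vb vs] by auto
  have rle1: "\<And>k j. j \<in> items M \<Longrightarrow> r k j \<le> 1"
  proof -
    fix k j assume j: "j \<in> items M"
    have "r k j \<le> (\<Sum>i\<in>items M. r k i)"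
      by (rule member_le_sum) (use j rnn in \<open>auto simp: items_def\<close>)
    then show "r k j \<le> 1" using rsum[of k] by linarith
  qed
  have gainE: "\<And>k. gain M p mech beta (sig k) = (\<Sum>i\<in>items M. r k i * (bv i + sv k i))"
    unfolding gain_def r_def by (rule sum.cong) (auto simp: bu su)
  have fin: "finite (items M)" unfolding items_def by simp

  have A: "\<And>k. 1 \<le> k \<Longrightarrow> k < M \<Longrightarrow> r k k \<ge> c - \<eta>"
  proof -
    fix k :: nat assume k: "1 \<le> k" "k < M"
    have kin: "k \<in> items M" using k unfolding items_def by auto
    have "OPT M p beta (sig k) \<ge> bu p beta k + su M p (sig k) k"
      by (rule OPT_ge) (use kin bu su HD[of k] D1 in \<open>auto simp: bv_def sv_def k\<close>)
    then have opt: "OPT M p beta (sig k) \<ge> H k" using kin bu su k by (simp add: bv_def sv_def)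
    have Hk0: "H k > 0" using HD[of k] D1 by auto
    have g1: "gain M p mech beta (sig k) \<ge> c * H k"
    proof -
      have "gain M p mech beta (sig k) \<ge> c * OPT M p beta (sig k)"
        using R[OF vb vs] opt Hk0 by auto
      moreover have "c * OPT M p beta (sig k) \<ge> c * H k" using opt c0 by (simp add: mult_left_mono)
      ultimately show ?thesis by linarith
    qed
    define Y where "Y = D * Q ^ (M - Suc k)"
    have mk: "M - k = Suc (M - Suc k)" using k by arith
    have HkY: "H k = Q * Y" unfolding H_def Y_def mk by (simp add: algebra_simps)
    have etaH: "\<eta> * H k = 2 * Y" using HkY etaQ by (simp add: mult.assoc[symmetric])
    have YD: "Y \<ge> D" unfolding Y_def using HD[of "Suc k"] unfolding H_def by simp
    have pw: "\<And>i. i \<in> items M \<Longrightarrow> r k i * (bv i + sv k i) \<le> (if i = k then r k i * H k else 0) + r k i * (\<eta> * H k)"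
    proof -
      fix i assume i: "i \<in> items M"
      have ri: "r k i \<ge> 0" using rnn i by auto
      have eH: "\<eta> * H k \<ge> 0" using eta0 Hk0 by simp
      show "?thesis i"
      proof (cases "i < k")
        case True
        have i1: "1 \<le> i" using i unfolding items_def by auto
        have "K * H i \<ge> 0" using K0 HD[of i] D1 by simp
        then have "H i \<le> (1 + K) * H i" by (simp add: algebra_simps)
        then have "H i \<le> L" using HL[OF i1] by linarith
        then have "bv i + sv k i \<le> 0" using True k unfolding bv_def sv_def by auto
        then have "r k i * (bv i + sv k i) \<le> 0" using ri by (simp add: mult_nonneg_nonpos)
        moreover have "r k i * (\<eta> * H k) \<ge> 0" using ri eH by simp
        ultimately show ?thesis using True by auto
      next
        case False
        show ?thesis
        proof (cases "i = k")
          case True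
          then show ?thesis using ri eH k unfolding bv_def sv_def by auto
        next
          case False2: False
          with False have ik: "i > k" by auto
          have "bv i + sv k i \<le> \<eta> * H k"
          proof (cases "i < M")
            case True
            have "H i \<le> Y" unfolding Y_def H_def using D1 Q1 ik
              by (intro mult_left_mono power_increasing) auto
            then show ?thesis using True ik etaH YD D1 k0 unfolding bv_def sv_def by auto
          next
            case False
            then show ?thesis using ik etaH YD D1 k0 unfolding bv_def sv_def by auto
          qed
          then have "r k i * (bv i + sv k i) \<le> r k i * (\<eta> * H k)" using ri by (simp add: mult_left_mono)
          then show ?thesis using False2 by auto
        qed
      qed
    qed
    have "gain M p mech beta (sig k) \<le> (\<Sum>i\<in>items M. (if i = k then r k i * H k else 0) + r k i * (\<eta> * H k))"
      unfolding gainE by (rule sum_mono) (rule pw)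
    also have "\<dots> = r k k * H k + (\<eta> * H k) * (\<Sum>i\<in>items M. r k i)"
      using kin fin by (simp add: sum.distrib sum_distrib_left mult.commute)
    also have "\<dots> \<le> r k k * H k + (\<eta> * H k)"
      using rsum[of k] eta0 Hk0 by (simp add: mult_left_le)
    finally have "c * H k \<le> r k k * H k + \<eta> * H k" using g1 by linarith
    then have "(r k k + \<eta> - c) * H k \<ge> 0" by (simp add: algebra_simps)
    then have "r k k + \<eta> - c \<ge> 0" using Hk0 by (simp add: zero_le_mult_iff)
    then show "r k k \<ge> c - \<eta>" by linarith
  qed

  have B: "W M \<ge> \<epsilon> * (c - \<eta>)"
  proof -
    have Min: "M \<in> items M" using M1 unfolding items_def by auto
    have opt0: "OPT M p beta (sig M) \<ge> bu p beta M + su M p (sig M) M"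
      by (rule OPT_ge) (use Min bu su k0 e0 in \<open>auto simp: bv_def sv_def\<close>)
    then have opt: "OPT M p beta (sig M) \<ge> \<kappa> + \<epsilon>" using Min bu su by (simp add: bv_def sv_def)
    have g1: "gain M p mech beta (sig M) \<ge> c * (\<kappa> + \<epsilon>)"
    proof -
      have "gain M p mech beta (sig M) \<ge> c * OPT M p beta (sig M)"
        using R[OF vb vs] opt k0 e0 by auto
      moreover have "c * OPT M p beta (sig M) \<ge> c * (\<kappa> + \<epsilon>)" using opt c0 by (simp add: mult_left_mono)
      ultimately show ?thesis by linarith
    qed
    define S where "S = (\<Sum>i\<in>items M. (if i < M then r M i * bv i else 0))"
    have pw: "\<And>i. i \<in> items M \<Longrightarrow> r M i * (bv i + sv M i) + K * (if i < M then r M i * bv i else 0)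
               \<le> (if i = M then r M i * (\<kappa> + \<epsilon>) else 0)"
    proof -
      fix i assume i: "i \<in> items M"
      have ri: "r M i \<ge> 0" using rnn i by auto
      show "?thesis i"
      proof (cases "i < M")
        case True
        have "(1 + K) * H i \<le> L" using HL[of i] i unfolding items_def by auto
        then have "(1 + K) * H i - L \<le> 0" by simp
        then have "r M i * ((1 + K) * H i - L) \<le> 0" using ri by (simp add: mult_nonneg_nonpos)
        then show ?thesis using True unfolding bv_def sv_def by (simp add: algebra_simps)
      next
        case False
        then have "i = M" using i unfolding items_def by auto
        then show ?thesis unfolding bv_def sv_def by simp
      qed
    qed
    have "gain M p mech beta (sig M) + K * S \<le> (\<Sum>i\<in>items M. (if i = M then r M i * (\<kappa> + \<epsilon>) else 0))"
    proof -
      have "gain M p mech beta (sig M) + K * S = (\<Sum>i\<in>items M. r M i * (bv i + sv M i) + K * (if i < M then r M i * bv i else 0))"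
        unfolding gainE S_def by (simp add: sum.distrib sum_distrib_left)
      also have "\<dots> \<le> (\<Sum>i\<in>items M. (if i = M then r M i * (\<kappa> + \<epsilon>) else 0))"
        by (rule sum_mono) (rule pw)
      finally show ?thesis .
    qed
    also have "\<dots> = r M M * (\<kappa> + \<epsilon>)" using Min fin by simp
    also have "\<dots> \<le> \<kappa> + \<epsilon>" using rle1[OF Min, of M] k0 e0 by (metis mult.commute mult_left_le add_nonneg_nonneg less_imp_le)
    finally have KS: "K * S \<le> (\<kappa> + \<epsilon>) - c * (\<kappa> + \<epsilon>)" using g1 by linarith
    have "c * (\<kappa> + \<epsilon>) \<ge> 0" using c0 k0 e0 by simp
    with KS have "K * S \<le> \<kappa> + \<epsilon>" by linarith
    then have "(\<eta> / 4) * (K * S) \<le> (\<eta> / 4) * (\<kappa> + \<epsilon>)" using eta0 by (simp add: mult_left_mono)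
    moreover have "(\<eta> / 4) * (K * S) = S" using etaK by (simp add: mult.assoc[symmetric])
    ultimately have Sb0: "S \<le> (\<eta> / 4) * (\<kappa> + \<epsilon>)" by linarith
    have "(\<eta> / 4) * (\<kappa> + \<epsilon>) = (\<kappa> * \<eta> + \<eta> * \<epsilon>) / 4" by (simp add: algebra_simps)
    also have "\<dots> = \<kappa> * \<eta> / 4 + \<kappa> + \<eta> / 4" unfolding etaeps by (simp add: field_simps)
    finally have Sb: "S \<le> \<kappa> * \<eta> / 4 + \<kappa> + \<eta> / 4" using Sb0 by linarith
    have rb: "(\<Sum>i\<in>items M. r M i * bv i) = S + r M M * \<kappa>"
    proof -
      have "(\<Sum>i\<in>items M. r M i * bv i) = (\<Sum>i\<in>items M. (if i < M then r M i * bv i else 0) + (if i = M then r M i * \<kappa> else 0))"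
        by (rule sum.cong) (auto simp: bv_def items_def)
      also have "\<dots> = S + r M M * \<kappa>" unfolding S_def using Min fin by (simp add: sum.distrib)
      finally show ?thesis .
    qed
    have WM: "W M = gain M p mech beta (sig M) - (\<Sum>i\<in>items M. r M i * bv i)"
      unfolding W_def gainE by (simp add: algebra_simps sum.distrib)
    have rk: "r M M * \<kappa> \<le> \<kappa>" using rle1[OF Min, of M] k0 by (metis mult.commute mult_left_le)
    have ke: "\<kappa> * \<eta> \<le> \<kappa> / 2" using eta1 k0 by (metis mult_left_mono mult_1_right times_divide_eq_right)
    have ck: "c * \<kappa> \<ge> 0" using c0 k0 by simp
    have WMb: "W M \<ge> c * (\<kappa> + \<epsilon>) - (\<kappa> * \<eta> / 4 + \<kappa> + \<eta> / 4) - \<kappa>"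
      using WM rb Sb rk g1 by linarith
    obtain A B X Y where d: "A = c * \<kappa>" "B = c * \<epsilon>" "X = \<kappa> * \<eta>" "Y = \<eta> * \<epsilon>" by blast
    have d1: "c * (\<kappa> + \<epsilon>) = A + B" using d by (simp add: algebra_simps)
    have d2: "\<epsilon> * (c - \<eta>) = B - Y" using d by (simp add: algebra_simps)
    have w: "W M \<ge> A + B - (X / 4 + \<kappa> + \<eta> / 4) - \<kappa>" using WMb unfolding d1 d(3)[symmetric] .
    have x: "X \<le> \<kappa> / 2" using ke d(3) by simp
    have a: "A \<ge> 0" using ck d(1) by simp
    have y: "Y = 4 * \<kappa> + \<eta>" using etaeps d(4) by simp
    show ?thesis unfolding d2 using w x a y k0 eta0 by linarith
  qed

  have C: "\<And>k. 1 \<le> k \<Longrightarrow> k < M \<Longrightarrow> W k \<ge> W (Suc k) + (if Suc k < M then \<epsilon> * r (Suc k) (Suc k) else 0)"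
  proof -
    fix k :: nat assume k: "1 \<le> k" "k < M"
    have sk: "Suc k \<in> items M" using k unfolding items_def by auto
    have L0: "L \<ge> 0"
    proof -
      have "(1 + K) * H 1 \<ge> 0" using K0 HD[of 1] D1 by simp
      then show ?thesis unfolding L_def by linarith
    qed
    have ic: "seller_util M p (mech beta (sig (Suc k))) (sig k) \<le> seller_util M p (mech beta (sig k)) (sig k)"
      using ds vb vs unfolding DSIC_def by blast
    have u1: "seller_util M p (mech beta (sig k)) (sig k) = W k"
      unfolding seller_util_def W_def r_def by (rule sum.cong) (auto simp: su)
    have u2: "seller_util M p (mech beta (sig (Suc k))) (sig k) = (\<Sum>i\<in>items M. r (Suc k) i * sv k i)"
      unfolding seller_util_def r_def by (rule sum.cong) (auto simp: su)
    have pw: "\<And>i. i \<in> items M \<Longrightarrow> r (Suc k) i * sv (Suc k) i + (if i = Suc k then (if Suc k < M then \<epsilon> * r (Suc k) i else 0) else 0)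
         \<le> r (Suc k) i * sv k i"
    proof -
      fix i assume i: "i \<in> items M"
      have ri: "r (Suc k) i \<ge> 0" using rnn i by auto
      consider "i < k" | "i = k" | "i = Suc k" | "i > Suc k" by linarith
      then show "?thesis i"
      proof cases
        case 1 then show ?thesis unfolding sv_def by auto
      next
        case 2 then show ?thesis unfolding sv_def using k ri L0 by (simp add: mult_nonneg_nonneg)
      next
        case 3 then show ?thesis unfolding sv_def using k by (auto simp: mult.commute)
      next
        case 4 then show ?thesis unfolding sv_def by auto
      qed
    qed
    have "W (Suc k) + (if Suc k < M then \<epsilon> * r (Suc k) (Suc k) else 0)
        = (\<Sum>i\<in>items M. r (Suc k) i * sv (Suc k) i + (if i = Suc k then (if Suc k < M then \<epsilon> * r (Suc k) i else 0) else 0))"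
      unfolding W_def using sk fin by (simp add: sum.distrib)
    also have "\<dots> \<le> (\<Sum>i\<in>items M. r (Suc k) i * sv k i)" by (rule sum_mono) (rule pw)
    finally show "W k \<ge> W (Suc k) + (if Suc k < M then \<epsilon> * r (Suc k) (Suc k) else 0)"
      using ic u1 u2 by linarith
  qed

  have d1: "c - \<eta> > 1 / real M"
  proof -
    obtain x where x: "x = 1 / real M" by blast
    have "\<eta> \<le> (c - x) / 2" using eta2 x by simp
    then have "2 * \<eta> \<le> c - x" by simp
    then show ?thesis using cM x by linarith
  qed
  have dM: "real M * (c - \<eta>) > 1"
  proof -
    have "1 < (c - \<eta>) * real M" using d1 Mpos by (simp add: divide_less_eq)
    then show ?thesis by (simp add: mult.commute)
  qed
  show False
  proof (cases "M = 1")
    case True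
    have "W 1 = r 1 1 * \<epsilon>" unfolding W_def sv_def using True by (simp add: items_def)
    then have "\<epsilon> * (c - \<eta>) \<le> \<epsilon> * r 1 1" using B True by (simp add: mult.commute)
    then have "c - \<eta> \<le> r 1 1" using e0 by simp
    moreover have "r 1 1 \<le> 1" using rle1[of 1 1] True by (simp add: items_def)
    ultimately show False using dM True by simp
  next
    case False
    then have M2: "M \<ge> 2" using M1 by auto
    have "\<forall>k. M - k = M - 1 \<longrightarrow> 1 \<le> k \<longrightarrow> k < M \<longrightarrow> W k \<ge> \<epsilon> * real (M - k) * (c - \<eta>)"
      by (rule chain[where M=M and r=r and d="c - \<eta>" and W=W and \<epsilon>=\<epsilon>, OF A B C e0])
    then have ch: "W 1 \<ge> \<epsilon> * real (M - 1) * (c - \<eta>)" using M2 by auto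
    have 1: "1 \<in> items M" using M2 unfolding items_def by auto
    have "W 1 = (\<Sum>i\<in>items M. \<epsilon> * r 1 i - (if i = 1 then \<epsilon> * r 1 i else 0))"
      unfolding W_def by (rule sum.cong) (use M2 in \<open>auto simp: sv_def items_def\<close>)
    also have "\<dots> = \<epsilon> * (\<Sum>i\<in>items M. r 1 i) - \<epsilon> * r 1 1"
      using 1 fin by (simp add: sum_subtractf sum_distrib_left)
    finally have W1: "W 1 = \<epsilon> * (\<Sum>i\<in>items M. r 1 i) - \<epsilon> * r 1 1" .
    have "\<epsilon> * (\<Sum>i\<in>items M. r 1 i) \<le> \<epsilon> * 1" using rsum[of 1] e0 by (intro mult_left_mono) auto
    then have "W 1 \<le> \<epsilon> * (1 - r 1 1)" using W1 by (simp add: algebra_simps)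
    with ch have "\<epsilon> * (real (M - 1) * (c - \<eta>)) \<le> \<epsilon> * (1 - r 1 1)" by (simp add: mult.assoc)
    then have "real (M - 1) * (c - \<eta>) \<le> 1 - r 1 1" using e0 by simp
    moreover have "r 1 1 \<ge> c - \<eta>" using A[of 1] M2 by auto
    moreover have "real (M - 1) = real M - 1" using M2 by auto
    ultimately have "real M * (c - \<eta>) \<le> 1" by (simp add: algebra_simps)
    then show False using dM by simp
  qed
qed

theorem corollary2:
  fixes M :: nat and p :: "nat \<Rightarrow> real" and mech :: mechanism
  assumes "M \<ge> 1"
    and "is_mechanism M mech"
    and "DSIC M p mech"
  shows "comp_ratio M p mech \<le> ereal (1 / real M)"
proof (rule ccontr)
  assume "\<not> comp_ratio M p mech \<le> ereal (1 / real M)"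
  then have "ereal (1 / real M) < comp_ratio M p mech" by simp
  then obtain c where c1: "ereal (1 / real M) < ereal c" and c2: "ereal c < comp_ratio M p mech"
    using ereal_dense2 by blast
  show False
  proof (rule core[OF assms])
    show "c > 1 / real M" using c1 by simp
    fix beta sigma assume "valid_buyer M beta" "valid_seller M sigma" "OPT M p beta sigma > 0"
    then show "gain M p mech beta sigma \<ge> c * OPT M p beta sigma"
      using ratio_bound[of c M p mech beta sigma] c2 by auto
  qed
qed

end
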